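(* Let $G$ be a locally compact Hausdorff group acting continuously on a locally compact Hausdorff space $X$, and let $\alpha$ be the induced action on $C_0(X)$, $(\alpha_gf)(x)=f(xg)$. The $G$-action on $X$ is free if and only if $$\mathrm{span}\{f_1\alpha_{(\cdot)}(f_2): f_1,f_2\in C_c(X)\}$$ is dense in $C(G,C(X))$ for the $\kappa$-topology, where $(f_1\alpha_{(\cdot)}(f_2))(g)=f_1\alpha_g(f_2)$.
   Context: $C_c(X)$ is the algebra of compactly supported continuous functions, $C(X)$ all continuous complex functions with the compact-open topology (seminorms $p_L(h)=\sup_{x\in L}|h(x)|$, $L$ compact). $C(G,C(X))$ is the $*$-algebra of continuous maps $G\to C(X)$ with the $\kappa$-topology given by the seminorms $u\mapsto\sup_{g\in K}p_L(u(g))$, $K\subseteq G$, $L\subseteq X$ compact. The action is free if $xg=x$ implies $g=e$. *)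

theory Defs
  imports "HOL-Analysis.Analysis"
begin

text \<open>The group G is written additively (type class topological_group_add,
which does NOT require commutativity): e = 0, gh = g + h.\<close>

definition right_action :: "('x::topological_space \<Rightarrow> 'g::topological_group_add \<Rightarrow> 'x) \<Rightarrow> bool" where
  "right_action act \<longleftrightarrow>
     (\<forall>x. act x 0 = x) \<and> (\<forall>x g h. act (act x g) h = act x (g + h)) \<and>
     continuous_on UNIV (\<lambda>(x, g). act x g)"

definition free_action :: "('x \<Rightarrow> 'g::group_add \<Rightarrow> 'x) \<Rightarrow> bool" where
  "free_action act \<longleftrightarrow> (\<forall>x g. act x g = x \<longrightarrow> g = 0)"

definition Cc :: "('x::topological_space \<Rightarrow> complex) \<Rightarrow> bool" where
  "Cc f \<longleftrightarrow> continuous_on UNIV f \<and> compact (closure {x. f x \<noteq> 0})"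

definition seminorm_le :: "'x set \<Rightarrow> ('x \<Rightarrow> complex) \<Rightarrow> real \<Rightarrow> bool" where
  "seminorm_le L h e \<longleftrightarrow> (\<forall>x\<in>L. cmod (h x) \<le> e)"

text \<open>C(G, C(X)): maps G -> C(X) continuous for the compact-open topology on C(X)
  (topology of the seminorms p_L, L compact).\<close>
definition CGCX :: "('g::topological_space \<Rightarrow> 'x::topological_space \<Rightarrow> complex) set" where
  "CGCX = {u. (\<forall>g. continuous_on UNIV (u g)) \<and>
     (\<forall>g0 L e. compact L \<and> e > 0 \<longrightarrow>
        (\<exists>U. open U \<and> g0 \<in> U \<and> (\<forall>g\<in>U. seminorm_le L (\<lambda>x. u g x - u g0 x) e)))}"

definition alpha_prod :: "('x \<Rightarrow> 'g \<Rightarrow> 'x) \<Rightarrow> ('x \<Rightarrow> complex) \<Rightarrow> ('x \<Rightarrow> complex) \<Rightarrow> 'g \<Rightarrow> 'x \<Rightarrow> complex" where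
  "alpha_prod act f1 f2 = (\<lambda>g x. f1 x * f2 (act x g))"

definition span_Cc :: "('x::topological_space \<Rightarrow> 'g \<Rightarrow> 'x) \<Rightarrow> ('g \<Rightarrow> 'x \<Rightarrow> complex) set" where
  "span_Cc act = {v. \<exists>(n::nat) (c::nat \<Rightarrow> complex) f1 f2.
      (\<forall>i<n. Cc (f1 i) \<and> Cc (f2 i)) \<and>
      v = (\<lambda>g x. \<Sum>i<n. c i * alpha_prod act (f1 i) (f2 i) g x)}"

text \<open>Density of S in C(G,C(X)) for the kappa-topology, given by the seminorms
  u |-> sup_{g in K} p_L(u(g)), K, L compact (a directed family, so basic
  neighbourhoods are single seminorm balls).\<close>
definition kappa_dense :: "('g::topological_space \<Rightarrow> 'x::topological_space \<Rightarrow> complex) set \<Rightarrow> bool" where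
  "kappa_dense S \<longleftrightarrow> (\<forall>u\<in>CGCX. \<forall>K L e. compact K \<and> compact L \<and> e > 0 \<longrightarrow>
      (\<exists>v\<in>S. \<forall>g\<in>K. seminorm_le L (\<lambda>x. u g x - v g x) e))"

end

theory Submission
  imports Defs
begin

lemma Hausdorff_eucl: "Hausdorff_space (euclidean :: 'a::t2_space topology)"
  unfolding Hausdorff_space_def by (simp add: disjnt_def) (metis hausdorff)

definition rcc :: "('a::topological_space \<Rightarrow> real) \<Rightarrow> bool" where
  "rcc f \<longleftrightarrow> continuous_on UNIV f \<and> compact (closure {x. f x \<noteq> 0})"

lemma cc_urysohn:
  fixes C T :: "'a::t2_space set"
  assumes lc: "locally_compact_space (euclidean::'a topology)" and "compact C" "closed T" "C \<inter> T = {}"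
  obtains f :: "'a \<Rightarrow> real" where "rcc f" "\<forall>x\<in>C. f x = 1" "\<forall>x\<in>T. f x = 0"
proof -
  have H: "Hausdorff_space (euclidean :: 'a topology)" by (rule Hausdorff_eucl)
  have c1: "compactin euclidean C" using assms(2) by (simp add: compactin_euclidean_iff)
  have lcc: "\<forall>K::'a set. compactin euclidean K
              \<longrightarrow> (\<exists>U L. openin euclidean U \<and> compactin euclidean L \<and> closedin euclidean L \<and> K \<subseteq> U \<and> U \<subseteq> L)"
    using iffD1[OF locally_compact_space_compact_closed_compact[OF disjI1[OF H]] lc] by blast
  obtain U L where UL0: "openin euclidean U" "compactin euclidean L" "closedin euclidean L" "C \<subseteq> U" "U \<subseteq> L"
    using lcc c1 by blast
  have "closed L" using UL0(3) by (metis closed_closedin)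
  have UL: "open U" "compact L" "closed L" "C \<subseteq> U" "U \<subseteq> L"
    using UL0 \<open>closed L\<close> by simp_all
  define W where "W = U - T"
  have "open W" using UL assms(3) by (simp add: W_def open_Diff)
  have cr: "completely_regular_space (euclidean :: 'a topology)"
    using locally_compact_regular_imp_completely_regular_space[OF lc] H by blast
  have c2: "closedin euclidean (- W)" using \<open>open W\<close> by (simp add: closed_closedin[symmetric] closed_Compl)
  have c3: "disjnt C (- W)" using assms(4) UL(4) unfolding W_def disjnt_def by blast
  obtain f :: "'a \<Rightarrow> real" where f: "continuous_map euclidean euclideanreal f" "f ` (- W) \<subseteq> {0}" "f ` C \<subseteq> {1}"
    using Urysohn_completely_regular_compact_closed_alt[OF cr c1 c2 c3, of 0 1] by blast
  show thesis
  proof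
    have "continuous_on UNIV f" using f(1) by simp
    moreover
    have "{x. f x \<noteq> 0} \<subseteq> L" using f(2) UL unfolding W_def by auto
    then have "closure {x. f x \<noteq> 0} \<subseteq> L" using UL(3) by (simp add: closure_minimal)
    then have "compact (closure {x. f x \<noteq> 0})"
      using compact_Int_closed[OF UL(2) closed_closure, of "{x. f x \<noteq> 0}"] by (simp add: Int_absorb1)
    ultimately show "rcc f" by (simp add: rcc_def)
    show "\<forall>x\<in>C. f x = 1" using f(3) by auto
    show "\<forall>x\<in>T. f x = 0" using f(2) W_def by auto
  qed
qed

lemma rcc_mult:
  assumes "rcc a" "rcc b" shows "rcc (\<lambda>x. a x * b x)"
proof -
  have "continuous_on UNIV (\<lambda>x. a x * b x)" using assms by (auto simp: rcc_def intro: continuous_intros)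
  moreover have "closure {x. a x * b x \<noteq> 0} \<subseteq> closure {x. a x \<noteq> 0}"
    by (rule closure_mono) auto
  then have "compact (closure {x. a x * b x \<noteq> 0})"
    using assms(1) compact_Int_closed[OF _ closed_closure, of "closure {x. a x \<noteq> 0}" "{x. a x * b x \<noteq> 0}"]
    unfolding rcc_def by (simp add: Int_absorb1)
  ultimately show ?thesis by (simp add: rcc_def)
qed


lemma rcc_Cc: "rcc a \<Longrightarrow> Cc (\<lambda>x. complex_of_real (a x))"
  unfolding rcc_def Cc_def by (auto intro: continuous_intros)

definition termf :: "('x \<Rightarrow> 'g \<Rightarrow> 'x) \<Rightarrow> (real \<times> ('x \<Rightarrow> real) \<times> ('x \<Rightarrow> real)) \<Rightarrow> 'x \<times> 'g \<Rightarrow> real" where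
  "termf act t p = fst t * fst (snd t) (fst p) * snd (snd t) (act (fst p) (snd p))"

definition evl :: "('x \<Rightarrow> 'g \<Rightarrow> 'x) \<Rightarrow> (real \<times> ('x \<Rightarrow> real) \<times> ('x \<Rightarrow> real)) list \<Rightarrow> 'x \<times> 'g \<Rightarrow> real" where
  "evl act ts = (\<lambda>p. sum_list (map (\<lambda>t. termf act t p) ts))"

definition prodl :: "(real \<times> ('x \<Rightarrow> real) \<times> ('x \<Rightarrow> real)) list \<Rightarrow> (real \<times> ('x \<Rightarrow> real) \<times> ('x \<Rightarrow> real)) list \<Rightarrow> (real \<times> ('x \<Rightarrow> real) \<times> ('x \<Rightarrow> real)) list" where
  "prodl xs ys = concat (map (\<lambda>s. map (\<lambda>t. (fst s * fst t, \<lambda>x. fst (snd s) x * fst (snd t) x,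
       \<lambda>x. snd (snd s) x * snd (snd t) x)) ys) xs)"

lemma evl_append: "evl act (xs @ ys) p = evl act xs p + evl act ys p"
  by (simp add: evl_def)

lemma evl_prodl: "evl act (prodl xs ys) p = evl act xs p * evl act ys p"
proof (induction xs)
  case Nil then show ?case by (simp add: evl_def prodl_def)
next
  case (Cons s xs)
  have "evl act (prodl (s # xs) ys) p = evl act (map (\<lambda>t. (fst s * fst t, \<lambda>x. fst (snd s) x * fst (snd t) x,
       \<lambda>x. snd (snd s) x * snd (snd t) x)) ys) p + evl act (prodl xs ys) p"
    by (simp add: prodl_def evl_def)
  also have "evl act (map (\<lambda>t. (fst s * fst t, \<lambda>x. fst (snd s) x * fst (snd t) x,
       \<lambda>x. snd (snd s) x * snd (snd t) x)) ys) p = sum_list (map (\<lambda>t. termf act s p * termf act t p) ys)"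
    by (simp add: evl_def termf_def o_def mult_ac)
  also have "\<dots> = termf act s p * evl act ys p"
    by (simp add: evl_def sum_list_const_mult)
  finally show ?case using Cons by (simp add: evl_def algebra_simps)
qed

lemma prodl_set:
  assumes "t \<in> set (prodl xs ys)"
  shows "\<exists>s\<in>set xs. \<exists>t'\<in>set ys. t = (fst s * fst t', \<lambda>x. fst (snd s) x * fst (snd t') x,
       \<lambda>x. snd (snd s) x * snd (snd t') x)"
  using assms by (auto simp: prodl_def)

lemma cont_act:
  assumes "right_action act"
  shows "continuous_on UNIV (\<lambda>p. act (fst p) (snd p))"
  using assms unfolding right_action_def by (simp add: case_prod_beta')

lemma cont_termf:
  fixes act :: "'x::topological_space \<Rightarrow> 'g::topological_space \<Rightarrow> 'x" and a b :: "'x \<Rightarrow> real"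
  assumes ca: "continuous_on UNIV (\<lambda>p. act (fst p) (snd p))" and "continuous_on UNIV a" "continuous_on UNIV b"
  shows "continuous_on UNIV (termf act (c, a, b))"
proof -
  have 1: "continuous_on UNIV (\<lambda>p::'x\<times>'g. a (fst p))"
    by (rule continuous_on_compose2[OF assms(2)]) (auto intro: continuous_intros)
  have 2: "continuous_on UNIV (\<lambda>p::'x\<times>'g. b (act (fst p) (snd p)))"
    by (rule continuous_on_compose2[OF assms(3) ca]) auto
  have "continuous_on UNIV (\<lambda>p::'x\<times>'g. c * a (fst p) * b (act (fst p) (snd p)))"
    using 1 2 by (intro continuous_intros)
  then show ?thesis unfolding termf_def[abs_def] by simp
qed

lemma evl_cont:
  fixes act :: "'x::topological_space \<Rightarrow> 'g::topological_space \<Rightarrow> 'x"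
  assumes ca: "continuous_on UNIV (\<lambda>p. act (fst p) (snd p))"
  and "\<forall>t\<in>set ts. rcc (fst (snd t)) \<and> rcc (snd (snd t))"
  shows "continuous_on UNIV (evl act ts)"
  using assms(2)
proof (induction ts)
  case Nil then show ?case by (simp add: evl_def)
next
  case (Cons t ts)
  obtain c a b where t: "t = (c, a, b)" by (cases t) auto
  have 1: "continuous_on UNIV (termf act t)"
    using Cons.prems t cont_termf[OF ca] by (simp add: rcc_def)
  have 2: "continuous_on UNIV (evl act ts)" using Cons by simp
  have "evl act (t # ts) = (\<lambda>p. termf act t p + evl act ts p)" by (simp add: evl_def)
  then show ?case using 1 2 by (simp add: continuous_on_add)
qed

lemma free_inj:
  assumes "right_action act" "free_action act" "act x g = act x h"
  shows "g = h"
proof -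
  have A: "\<forall>x. act x 0 = x" "\<forall>x g h. act (act x g) h = act x (g + h)" using assms(1) by (auto simp: right_action_def)
  have "act x (h + - g) = act (act x h) (-g)" using A by simp
  also have "\<dots> = act (act x g) (-g)" using assms(3) by simp
  also have "\<dots> = x" using A by simp
  finally have "h + - g = 0" using assms(2) unfolding free_action_def by blast
  have "h = (h + - g) + g" by (simp add: add.assoc)
  then show ?thesis using \<open>h + - g = 0\<close> by simp
qed

lemma sum_list_nth: "sum_list (map f xs) = (\<Sum>i<length xs. f (xs ! i))"
  by (induction xs) (simp_all add: sum.lessThan_Suc_shift del: sum.lessThan_Suc)

lemma sum_list_ofreal:
  "sum_list (map (\<lambda>t. complex_of_real (fst t) * complex_of_real (fst (snd t) x) * complex_of_real (snd (snd t) y)) ts)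
   = complex_of_real (sum_list (map (\<lambda>t. fst t * fst (snd t) x * snd (snd t) y) ts))"
  by (induction ts) auto

lemma sum_list_ofreal_i:
  "sum_list (map (\<lambda>t. \<i> * complex_of_real (fst t) * complex_of_real (fst (snd t) x) * complex_of_real (snd (snd t) y)) ts)
   = \<i> * complex_of_real (sum_list (map (\<lambda>t. fst t * fst (snd t) x * snd (snd t) y) ts))"
  by (induction ts) (auto simp: algebra_simps)


lemma CGCX_joint:
  fixes u :: "'g::topological_space \<Rightarrow> 'x::topological_space \<Rightarrow> complex"
  assumes u: "u \<in> CGCX" and L: "compact L"
  shows "continuous_on (L \<times> K) (\<lambda>p. u (snd p) (fst p))"
  unfolding continuous_on_topological
proof (intro ballI allI impI)
  fix p B assume p: "p \<in> L \<times> K" and B: "open B" "u (snd p) (fst p) \<in> B"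
  obtain x0 g0 where p0: "p = (x0, g0)" by (cases p)
  obtain r where r: "r > 0" "ball (u g0 x0) r \<subseteq> B" using openE[OF B(1) B(2)] unfolding p0 by auto
  from u have cg: "\<And>g. continuous_on UNIV (u g)"
    and nb: "\<And>g0 L e. compact L \<Longrightarrow> e > 0 \<Longrightarrow> (\<exists>U. open U \<and> g0 \<in> U \<and> (\<forall>g\<in>U. seminorm_le L (\<lambda>x. u g x - u g0 x) e))"
    unfolding CGCX_def by blast+
  obtain V where V: "open V" "g0 \<in> V" "\<forall>g\<in>V. seminorm_le L (\<lambda>x. u g x - u g0 x) (r/2)"
    using nb[OF L, of "r/2" g0] r(1) by auto
  have ct: "\<forall>x\<in>UNIV. \<forall>B. open B \<longrightarrow> u g0 x \<in> B \<longrightarrow> (\<exists>A. open A \<and> x \<in> A \<and> (\<forall>y\<in>UNIV. y \<in> A \<longrightarrow> u g0 y \<in> B))"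
    using cg[of g0] by (simp only: continuous_on_topological)
  have "\<exists>A. open A \<and> x0 \<in> A \<and> (\<forall>y\<in>UNIV. y \<in> A \<longrightarrow> u g0 y \<in> ball (u g0 x0) (r/2))"
  proof (rule ct[rule_format])
    show "open (ball (u g0 x0) (r/2))" by simp
    show "u g0 x0 \<in> ball (u g0 x0) (r/2)" using r(1) by simp
  qed simp
  then obtain W where W: "open W" "x0 \<in> W" "\<forall>y\<in>W. u g0 y \<in> ball (u g0 x0) (r/2)" by blast
  show "\<exists>A. open A \<and> p \<in> A \<and> (\<forall>y\<in>L \<times> K. y \<in> A \<longrightarrow> u (snd y) (fst y) \<in> B)"
  proof (intro exI conjI)
    show "open (W \<times> V)" using W V by (simp add: open_Times)
    show "p \<in> W \<times> V" using p0 W V by simp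
    show "\<forall>y\<in>L \<times> K. y \<in> W \<times> V \<longrightarrow> u (snd y) (fst y) \<in> B"
    proof (intro ballI impI)
      fix y assume y: "y \<in> L \<times> K" "y \<in> W \<times> V"
      obtain x g where y0: "y = (x, g)" by (cases y)
      have 1: "cmod (u g x - u g0 x) \<le> r/2" using V y y0 by (auto simp: seminorm_le_def)
      have "dist (u g0 x0) (u g0 x) < r/2" using W y y0 by auto
      then have 2: "cmod (u g0 x - u g0 x0) < r/2" by (simp add: dist_norm norm_minus_commute)
      have "u g0 x0 - u g x = - ((u g x - u g0 x) + (u g0 x - u g0 x0))" by simp
      then have "cmod (u g0 x0 - u g x) = cmod ((u g x - u g0 x) + (u g0 x - u g0 x0))"
        by (metis norm_minus_cancel)
      also have "\<dots> \<le> cmod (u g x - u g0 x) + cmod (u g0 x - u g0 x0)" by (rule norm_triangle_ineq)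
      finally have "dist (u g0 x0) (u g x) < r" using 1 2 by (simp add: dist_norm)
      then show "u (snd y) (fst y) \<in> B" using r(2) y0 by auto
    qed
  qed
qed


lemma dense_dir:
  fixes act :: "'x::t2_space \<Rightarrow> 'g::{topological_group_add, t2_space} \<Rightarrow> 'x"
  assumes lcX: "locally_compact_space (euclidean :: 'x topology)"
    and ra: "right_action act" and free: "free_action act"
  shows "kappa_dense (span_Cc act)"
  unfolding kappa_dense_def
proof (intro ballI allI impI)
  fix u :: "'g \<Rightarrow> 'x \<Rightarrow> complex" and K :: "'g set" and L :: "'x set" and e :: real
  assume u: "u \<in> CGCX" and KLe: "compact K \<and> compact L \<and> e > 0"
  then have K: "compact K" and L: "compact L" and e: "e > 0" by auto
  define S where "S = L \<times> K"
  have ca: "continuous_on UNIV (\<lambda>p. act (fst p) (snd p))" using cont_act[OF ra] .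
  define R where "R = {F. \<exists>ts. (\<forall>t\<in>set ts. rcc (fst (snd t)) \<and> rcc (snd (snd t))) \<and> (\<forall>p\<in>S. F p = evl act ts p)}"
  have cS: "compact S" using K L by (simp add: S_def compact_Times)
  have cimg: "compact ((\<lambda>p. act (fst p) (snd p)) ` S)"
    by (rule compact_continuous_image[OF continuous_on_subset[OF ca] cS]) simp
  obtain b1 where b1: "rcc b1" "\<forall>y\<in>(\<lambda>p. act (fst p) (snd p)) ` S. b1 y = 1"
    using cc_urysohn[OF lcX cimg closed_empty] by auto
  obtain a1 where a1: "rcc a1" "\<forall>x\<in>L. a1 x = 1"
    using cc_urysohn[OF lcX L closed_empty] by auto
  have c_cont: "continuous_on S F" if FR: "F \<in> R" for F
  proof -
    obtain ts where ts: "\<forall>t\<in>set ts. rcc (fst (snd t)) \<and> rcc (snd (snd t))" "\<forall>p\<in>S. F p = evl act ts p"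
      using FR unfolding R_def by blast
    have "continuous_on S (evl act ts)" using evl_cont[OF ca ts(1)] continuous_on_subset by blast
    then show ?thesis using continuous_on_cong[OF refl, of S F "evl act ts"] ts(2) by blast
  qed
  have c_add: "(\<lambda>x. F x + G x) \<in> R" if FR: "F \<in> R" "G \<in> R" for F G
  proof -
    obtain ts where ts: "\<forall>t\<in>set ts. rcc (fst (snd t)) \<and> rcc (snd (snd t))" "\<forall>p\<in>S. F p = evl act ts p"
      using FR(1) unfolding R_def by blast
    obtain ts' where ts': "\<forall>t\<in>set ts'. rcc (fst (snd t)) \<and> rcc (snd (snd t))" "\<forall>p\<in>S. G p = evl act ts' p"
      using FR(2) unfolding R_def by blast
    show ?thesis unfolding R_def
      by (rule CollectI, rule exI[of _ "ts @ ts'"]) (use ts ts' in \<open>auto simp: evl_append\<close>)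
  qed
  have c_mult: "(\<lambda>x. F x * G x) \<in> R" if FR: "F \<in> R" "G \<in> R" for F G
  proof -
    obtain ts where ts: "\<forall>t\<in>set ts. rcc (fst (snd t)) \<and> rcc (snd (snd t))" "\<forall>p\<in>S. F p = evl act ts p"
      using FR(1) unfolding R_def by blast
    obtain ts' where ts': "\<forall>t\<in>set ts'. rcc (fst (snd t)) \<and> rcc (snd (snd t))" "\<forall>p\<in>S. G p = evl act ts' p"
      using FR(2) unfolding R_def by blast
    have "\<forall>t\<in>set (prodl ts ts'). rcc (fst (snd t)) \<and> rcc (snd (snd t))"
    proof
      fix t assume "t \<in> set (prodl ts ts')"
      then obtain s t' where "s \<in> set ts" "t' \<in> set ts'" and t: "t = (fst s * fst t', \<lambda>x. fst (snd s) x * fst (snd t') x,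
       \<lambda>x. snd (snd s) x * snd (snd t') x)" using prodl_set by blast
      then show "rcc (fst (snd t)) \<and> rcc (snd (snd t))" using ts(1) ts'(1) by (auto intro: rcc_mult)
    qed
    moreover have "\<forall>p\<in>S. F p * G p = evl act (prodl ts ts') p" using ts(2) ts'(2) by (simp add: evl_prodl)
    ultimately show ?thesis unfolding R_def by blast
  qed
  have c_const: "(\<lambda>_. c) \<in> R" for c
  proof -
    have "\<forall>p\<in>S. c = evl act [(c, a1, b1)] p"
    proof
      fix p assume "p \<in> S"
      then have "a1 (fst p) = 1" "b1 (act (fst p) (snd p)) = 1" using a1 b1 by (auto simp: S_def)
      then show "c = evl act [(c, a1, b1)] p" by (simp add: evl_def termf_def)
    qed
    then show ?thesis unfolding R_def using a1(1) b1(1) by (intro CollectI exI[of _ "[(c, a1, b1)]"]) auto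
  qed
  have c_sep: "\<exists>F\<in>R. F p \<noteq> F q" if pq: "p \<in> S" "q \<in> S" "p \<noteq> q" for p q
  proof -
    obtain x g where p: "p = (x, g)" by (cases p)
    obtain x' g' where q: "q = (x', g')" by (cases q)
    show ?thesis
    proof (cases "x = x'")
      case False
      obtain a where a: "rcc a" "\<forall>y\<in>{x}. a y = 1" "\<forall>y\<in>{x'}. a y = 0"
        using cc_urysohn[OF lcX compact_sing[of x] closed_singleton[of x']] False by auto
      have inR: "evl act [(1, a, b1)] \<in> R" unfolding R_def using a(1) b1(1) by (intro CollectI exI[of _ "[(1, a, b1)]"]) auto
      have "evl act [(1, a, b1)] p = 1" "evl act [(1, a, b1)] q = 0"
        using a b1 pq p q by (auto simp: evl_def termf_def S_def)
      then show ?thesis using inR by (intro bexI[of _ "evl act [(1, a, b1)]"]) auto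
    next
      case True
      then have "g \<noteq> g'" using pq p q by auto
      then have ne: "act x g \<noteq> act x g'" using free_inj[OF ra free] by blast
      obtain b where b: "rcc b" "\<forall>y\<in>{act x g}. b y = 1" "\<forall>y\<in>{act x g'}. b y = 0"
        using cc_urysohn[OF lcX compact_sing[of "act x g"] closed_singleton[of "act x g'"]] ne by auto
      have inR: "evl act [(1, a1, b)] \<in> R" unfolding R_def using a1(1) b(1) by (intro CollectI exI[of _ "[(1, a1, b)]"]) auto
      have "x \<in> L" using pq p by (auto simp: S_def)
      then have "evl act [(1, a1, b)] p = 1" "evl act [(1, a1, b)] q = 0"
        using a1 b p q True by (auto simp: evl_def termf_def)
      then show ?thesis using inR by (intro bexI[of _ "evl act [(1, a1, b)]"]) auto
    qed
  qed
  have fr: "function_ring_on R S"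
    apply unfold_locales
         apply (rule cS)
        apply (erule c_cont)
       apply (erule (1) c_add)
      apply (erule (1) c_mult)
     apply (rule c_const)
    apply (erule (2) c_sep)
    done
  define U where "U = (\<lambda>p. u (snd p) (fst p))"
  have cU: "continuous_on S U" unfolding U_def S_def using CGCX_joint[OF u L] .
  have cRe: "continuous_on S (\<lambda>p. Re (U p))" using cU by (intro continuous_intros)
  have cIm: "continuous_on S (\<lambda>p. Im (U p))" using cU by (intro continuous_intros)
  have e2: "e / 2 > 0" using e by simp
  obtain F1 where F1: "F1 \<in> R" "\<forall>p\<in>S. \<bar>Re (U p) - F1 p\<bar> < e / 2"
    using function_ring_on.Stone_Weierstrass_basic[OF fr cRe e2] by blast
  obtain F2 where F2: "F2 \<in> R" "\<forall>p\<in>S. \<bar>Im (U p) - F2 p\<bar> < e / 2"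
    using function_ring_on.Stone_Weierstrass_basic[OF fr cIm e2] by blast
  obtain ts1 where ts1: "\<forall>t\<in>set ts1. rcc (fst (snd t)) \<and> rcc (snd (snd t))" "\<forall>p\<in>S. F1 p = evl act ts1 p"
    using F1(1) unfolding R_def by blast
  obtain ts2 where ts2: "\<forall>t\<in>set ts2. rcc (fst (snd t)) \<and> rcc (snd (snd t))" "\<forall>p\<in>S. F2 p = evl act ts2 p"
    using F2(1) unfolding R_def by blast
  define zs where "zs = map (\<lambda>t. (complex_of_real (fst t), snd t)) ts1 @ map (\<lambda>t. (\<i> * complex_of_real (fst t), snd t)) ts2"
  define n where "n = length zs"
  define c where "c = (\<lambda>i. fst (zs ! i))"
  define f1 where "f1 = (\<lambda>i x. complex_of_real (fst (snd (zs ! i)) x))"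
  define f2 where "f2 = (\<lambda>i x. complex_of_real (snd (snd (zs ! i)) x))"
  define v where "v = (\<lambda>g x. \<Sum>i<n. c i * alpha_prod act (f1 i) (f2 i) g x)"
  have zs_rcc: "\<forall>z\<in>set zs. rcc (fst (snd z)) \<and> rcc (snd (snd z))"
    using ts1(1) ts2(1) by (auto simp: zs_def)
  have "v \<in> span_Cc act"
    unfolding span_Cc_def
  proof (intro CollectI exI conjI allI impI)
    fix i assume "i < n"
    then have "zs ! i \<in> set zs" by (simp add: n_def)
    then show "Cc (f1 i)" "Cc (f2 i)" using zs_rcc by (auto simp: f1_def f2_def intro: rcc_Cc)
  qed (simp add: v_def)
  moreover have "\<forall>g\<in>K. seminorm_le L (\<lambda>x. u g x - v g x) e"
    unfolding seminorm_le_def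
  proof (intro ballI)
    fix g x assume g: "g \<in> K" and x: "x \<in> L"
    have pS: "(x, g) \<in> S" using g x by (simp add: S_def)
    let ?fz = "\<lambda>z. fst z * complex_of_real (fst (snd z) x) * complex_of_real (snd (snd z) (act x g))"
    have "v g x = (\<Sum>i<length zs. ?fz (zs ! i))"
      by (simp add: v_def n_def c_def f1_def f2_def alpha_prod_def mult_ac)
    also have "\<dots> = sum_list (map ?fz zs)" by (simp add: sum_list_nth)
    also have "\<dots> = complex_of_real (evl act ts1 (x, g)) + \<i> * complex_of_real (evl act ts2 (x, g))"
      by (simp add: zs_def o_def evl_def termf_def sum_list_ofreal sum_list_ofreal_i)
    finally have vgx: "v g x = complex_of_real (F1 (x, g)) + \<i> * complex_of_real (F2 (x, g))"
      using ts1(2) ts2(2) pS by simp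
    have a: "\<bar>Re (u g x) - F1 (x, g)\<bar> < e / 2" using F1(2) pS by (force simp: U_def)
    have b: "\<bar>Im (u g x) - F2 (x, g)\<bar> < e / 2" using F2(2) pS by (force simp: U_def)
    have "u g x - v g x = complex_of_real (Re (u g x) - F1 (x, g)) + \<i> * complex_of_real (Im (u g x) - F2 (x, g))"
      unfolding vgx by (simp add: complex_eq_iff)
    then have "cmod (u g x - v g x) \<le> cmod (complex_of_real (Re (u g x) - F1 (x, g))) + cmod (\<i> * complex_of_real (Im (u g x) - F2 (x, g)))"
      by (simp only: norm_triangle_ineq)
    also have "\<dots> = \<bar>Re (u g x) - F1 (x, g)\<bar> + \<bar>Im (u g x) - F2 (x, g)\<bar>"
      by (simp add: norm_mult del: of_real_diff)
    finally show "cmod (u g x - v g x) \<le> e" using a b by simp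
  qed
  ultimately show "\<exists>v\<in>span_Cc act. \<forall>g\<in>K. seminorm_le L (\<lambda>x. u g x - v g x) e" by blast
qed


lemma free_dir:
  fixes act :: "'x::t2_space \<Rightarrow> 'g::{topological_group_add, t2_space} \<Rightarrow> 'x"
  assumes lcG: "locally_compact_space (euclidean :: 'g topology)"
    and ra: "right_action act" and dense: "kappa_dense (span_Cc act)"
  shows "free_action act"
  unfolding free_action_def
proof (intro allI impI)
  fix x :: 'x and g :: 'g
  assume fx: "act x g = x"
  show "g = 0"
  proof (rule ccontr)
    assume g0: "g \<noteq> 0"
    have H: "Hausdorff_space (euclidean :: 'g topology)" by (rule Hausdorff_eucl)
    have crg: "completely_regular_space (euclidean :: 'g topology)"
      using locally_compact_regular_imp_completely_regular_space[OF lcG] H by blast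
    have c1: "compactin euclidean {g}" by simp
    have c2: "closedin euclidean {0::'g}" using closed_singleton[of "0::'g"] by (metis closed_closedin)
    have c3: "disjnt {g} {0}" using g0 by (simp add: disjnt_def)
    obtain \<phi> :: "'g \<Rightarrow> real" where phi: "continuous_map euclidean euclideanreal \<phi>" "\<phi> ` {0} \<subseteq> {0}" "\<phi> ` {g} \<subseteq> {1}"
      using Urysohn_completely_regular_compact_closed_alt[OF crg c1 c2 c3, of 0 1] by blast
    have cphi: "continuous_on UNIV \<phi>" using phi(1) by simp
    have phi0: "\<phi> 0 = 0" and phig: "\<phi> g = 1" using phi by auto
    define u where "u = (\<lambda>(h::'g) (y::'x). complex_of_real (\<phi> h))"
    have uC: "u \<in> CGCX"
      unfolding CGCX_def mem_Collect_eq
    proof (intro conjI allI impI)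
      fix h show "continuous_on UNIV (u h)" by (simp add: u_def)
    next
      fix g0 :: 'g and L :: "'x set" and e :: real
      assume "compact L \<and> e > 0"
      then have e: "e > 0" by simp
      define U where "U = {h. dist (\<phi> h) (\<phi> g0) < e}"
      have "open U" unfolding U_def
        by (rule open_Collect_less) (use cphi in \<open>auto intro: continuous_intros\<close>)
      moreover have "g0 \<in> U" using e by (simp add: U_def)
      moreover have "\<forall>h\<in>U. seminorm_le L (\<lambda>y. u h y - u g0 y) e"
      proof (intro ballI)
        fix h assume "h \<in> U"
        then have d: "\<bar>\<phi> h - \<phi> g0\<bar> < e" by (simp add: U_def dist_real_def)
        have "complex_of_real (\<phi> h) - complex_of_real (\<phi> g0) = complex_of_real (\<phi> h - \<phi> g0)" by simp
        then have "cmod (u h y - u g0 y) = \<bar>\<phi> h - \<phi> g0\<bar>" for y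
          by (simp only: u_def norm_of_real)
        then show "seminorm_le L (\<lambda>y. u h y - u g0 y) e" using d by (simp add: seminorm_le_def)
      qed
      ultimately show "\<exists>U. open U \<and> g0 \<in> U \<and> (\<forall>h\<in>U. seminorm_le L (\<lambda>y. u h y - u g0 y) e)" by blast
    qed
    have "\<exists>v\<in>span_Cc act. \<forall>h\<in>{0, g}. seminorm_le {x} (\<lambda>y. u h y - v h y) (1/3)"
      by (rule dense[unfolded kappa_dense_def, rule_format, OF uC]) simp
    then obtain v where v: "v \<in> span_Cc act" and vb: "\<forall>h\<in>{0, g}. seminorm_le {x} (\<lambda>y. u h y - v h y) (1/3)"
      by blast
    from v obtain n :: nat and c :: "nat \<Rightarrow> complex" and f1 f2 :: "nat \<Rightarrow> 'x \<Rightarrow> complex" where vdef: "v = (\<lambda>h y. \<Sum>i<n. c i * alpha_prod act (f1 i) (f2 i) h y)"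
      unfolding span_Cc_def by blast
    have act0: "act x 0 = x" using ra by (simp add: right_action_def)
    have veq: "v g x = v 0 x" using fx act0 by (simp add: vdef alpha_prod_def)
    have 1: "cmod (v 0 x) \<le> 1/3" using vb phi0 by (simp add: seminorm_le_def u_def)
    have 2: "cmod (1 - v g x) \<le> 1/3" using vb phig by (simp add: seminorm_le_def u_def)
    have "cmod (1::complex) \<le> cmod (1 - v g x) + cmod (v g x)"
      using norm_triangle_ineq[of "1 - v g x" "v g x"] by simp
    then show False using 1 2 veq by simp
  qed
qed

theorem mainTheorem17:
  fixes act :: "'x::t2_space \<Rightarrow> 'g::{topological_group_add, t2_space} \<Rightarrow> 'x"
  assumes "locally_compact_space (euclidean :: 'g topology)"
    and "locally_compact_space (euclidean :: 'x topology)"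
    and "right_action act"
  shows "free_action act \<longleftrightarrow> kappa_dense (span_Cc act)"
  using dense_dir[OF assms(2) assms(3)] free_dir[OF assms(1) assms(3)] by blast

end
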